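(* Every width-$k$ puzzle that is a USP (in particular every strong USP) has size at most $2^k$.
   Context: A width-$k$ puzzle is a finite set $P \subseteq \{1,2,3\}^k$, of size $|P|$; for $r\in P$, $r_c$ is the $c$-th coordinate. $\mathrm{Sym}(P)$ is the group of permutations of $P$. $P$ is a USP if for all $\pi_1,\pi_2,\pi_3 \in \mathrm{Sym}(P)$, either $\pi_1=\pi_2=\pi_3$, or there exist $r \in P$ and $c \in [k]$ such that at least two of $(\pi_1(r))_c = 1$, $(\pi_2(r))_c = 2$, $(\pi_3(r))_c = 3$ hold. $P$ is a strong USP if the same holds with "at least two" replaced by "exactly two". *)

theory Defs
  imports "HOL-Combinatorics.Permutations"
begin

text \<open>A row of a width-k puzzle is a list of length k with entries in {1,2,3};
  coordinate c in [k] corresponds to list index c-1 (0-based, c < k).\<close>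

definition puzzle :: "nat \<Rightarrow> nat list set \<Rightarrow> bool" where
  "puzzle k P \<longleftrightarrow> finite P \<and> (\<forall>r\<in>P. length r = k \<and> set r \<subseteq> {1,2,3})"

definition USP :: "nat \<Rightarrow> nat list set \<Rightarrow> bool" where
  "USP k P \<longleftrightarrow>
    (\<forall>\<pi>1 \<pi>2 \<pi>3. \<pi>1 permutes P \<and> \<pi>2 permutes P \<and> \<pi>3 permutes P \<longrightarrow>
      (\<pi>1 = \<pi>2 \<and> \<pi>2 = \<pi>3) \<or>
      (\<exists>r\<in>P. \<exists>c<k.
        let a = (\<pi>1 r ! c = 1); b = (\<pi>2 r ! c = 2); d = (\<pi>3 r ! c = 3)
        in (a \<and> b) \<or> (a \<and> d) \<or> (b \<and> d)))"

definition strong_USP :: "nat \<Rightarrow> nat list set \<Rightarrow> bool" where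
  "strong_USP k P \<longleftrightarrow>
    (\<forall>\<pi>1 \<pi>2 \<pi>3. \<pi>1 permutes P \<and> \<pi>2 permutes P \<and> \<pi>3 permutes P \<longrightarrow>
      (\<pi>1 = \<pi>2 \<and> \<pi>2 = \<pi>3) \<or>
      (\<exists>r\<in>P. \<exists>c<k.
        let a = (\<pi>1 r ! c = 1); b = (\<pi>2 r ! c = 2); d = (\<pi>3 r ! c = 3)
        in (a \<and> b \<and> \<not> d) \<or> (a \<and> d \<and> \<not> b) \<or> (b \<and> d \<and> \<not> a)))"

end

theory Submission
  imports Defs
begin

lemma inj_lemma:
  assumes r: "r \<in> P" and s: "s \<in> P" and rs: "r \<noteq> s"
    and eq: "{c. c<k \<and> r!c = 3} = {c. c<k \<and> s!c = (3::nat)}"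
    and H: "\<exists>t\<in>P. \<exists>c<k. (t ! c = 1 \<or> t ! c = 2) \<and> transpose r s t ! c = 3"
  shows False
proof -
  from H obtain t c where t: "t \<in> P" "c < k" "t ! c = 1 \<or> t ! c = 2" "transpose r s t ! c = 3"
    by blast
  show False
  proof (cases "t = r")
    case True
    then have "s ! c = 3" using t by simp
    then have "r ! c = 3" using eq t(2) by blast
    then show False using t True by auto
  next
    case False
    show False
    proof (cases "t = s")
      case True
      then have "r ! c = 3" using t by simp
      then have "s ! c = 3" using eq t(2) by blast
      then show False using t True by auto
    next
      case False
      then have "t ! c = 3" using t \<open>t \<noteq> r\<close> by (simp add: transpose_def)
      then show False using t by auto
    qed
  qed
qed

lemma bound:
  assumes fin: "finite P" and len: "\<forall>r\<in>P. length r = k"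
    and H: "\<And>r s. r \<in> P \<Longrightarrow> s \<in> P \<Longrightarrow> r \<noteq> s \<Longrightarrow>
       \<exists>t\<in>P. \<exists>c<k. (t ! c = 1 \<or> t ! c = 2) \<and> transpose r s t ! c = (3::nat)"
  shows "card P \<le> 2 ^ k"
proof -
  define f where "f r = {c. c<k \<and> r!c = (3::nat)}" for r
  have inj: "inj_on f P"
  proof (rule inj_onI, rule ccontr)
    fix r s assume rs: "r \<in> P" "s \<in> P" "f r = f s" "r \<noteq> s"
    show False
      by (rule inj_lemma[OF rs(1,2,4) rs(3)[unfolded f_def] H[OF rs(1,2,4)]])
  qed
  have "f ` P \<subseteq> Pow {..<k}" unfolding f_def by auto
  then have "card (f ` P) \<le> card (Pow {..<k::nat})"
    by (intro card_mono) auto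
  also have "\<dots> = 2 ^ k" by (simp add: card_Pow)
  finally show ?thesis using card_image[OF inj] by simp
qed

theorem mainTheorem4:
  fixes k :: nat and P :: "nat list set"
  assumes "puzzle k P"
  shows "(USP k P \<longrightarrow> card P \<le> 2 ^ k) \<and> (strong_USP k P \<longrightarrow> card P \<le> 2 ^ k)"
proof -
  have fin: "finite P" and len: "\<forall>r\<in>P. length r = k" using assms by (auto simp: puzzle_def)
  have perm: "transpose r s permutes P" if "r \<in> P" "s \<in> P" for r s
    using that by (rule permutes_swap_id)
  have neq: "id \<noteq> transpose r s" if "r \<noteq> s" for r s :: "nat list"
    using that by (metis id_apply transpose_apply_first)
  show ?thesis
  proof (intro conjI impI)
    assume U: "USP k P"
    show "card P \<le> 2 ^ k"
    proof (rule bound[OF fin len])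
      fix r s assume rs: "r \<in> P" "s \<in> P" "r \<noteq> s"
      have "\<exists>t\<in>P. \<exists>c<k. let a = (id t ! c = 1); b = (id t ! c = 2); d = (transpose r s t ! c = 3)
        in (a \<and> b) \<or> (a \<and> d) \<or> (b \<and> d)"
        using U[unfolded USP_def, rule_format, of id id "transpose r s"] perm[OF rs(1,2)] neq[OF rs(3)] permutes_id[of P] by simp
      then show "\<exists>t\<in>P. \<exists>c<k. (t ! c = 1 \<or> t ! c = 2) \<and> transpose r s t ! c = (3::nat)"
        by (auto simp: Let_def)
    qed
  next
    assume U: "strong_USP k P"
    show "card P \<le> 2 ^ k"
    proof (rule bound[OF fin len])
      fix r s assume rs: "r \<in> P" "s \<in> P" "r \<noteq> s"
      have "\<exists>t\<in>P. \<exists>c<k. let a = (id t ! c = 1); b = (id t ! c = 2); d = (transpose r s t ! c = 3)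
        in (a \<and> b \<and> \<not> d) \<or> (a \<and> d \<and> \<not> b) \<or> (b \<and> d \<and> \<not> a)"
        using U[unfolded strong_USP_def, rule_format, of id id "transpose r s"] perm[OF rs(1,2)] neq[OF rs(3)] permutes_id[of P] by simp
      then show "\<exists>t\<in>P. \<exists>c<k. (t ! c = 1 \<or> t ! c = 2) \<and> transpose r s t ! c = (3::nat)"
        by (auto simp: Let_def)
    qed
  qed
qed

end
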